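(* Let $K\ge1$, $r>0$ and $\mathcal S\subset[0,r]^K$. Let $U$ be the uniform probability measure on $\mathbb S^{K-1}_+=\{v\in\mathbb R^K:\|v\|_2=1,\ v_i\ge0\ \forall i\}$, and $c_K=\pi^{K/2}/(2^K\Gamma(K/2+1))$. Then $$\mathrm{HV}_r(\mathcal S)=c_K\,\mathbb E_{u\sim U}\Big[\sup_{s\in\mathcal S}\min_{k\in[K]}\Big(\frac{r-s_k}{u_k}\Big)^K\Big].$$
   Context: $\mathrm{HV}_r(\mathcal S)=\mathrm{vol}(\{x\in[0,r]^K:\exists s\in\mathcal S,\ s\preceq x\})$, where $\mathrm{vol}$ is Lebesgue measure and $s\preceq x$ means $s_i\le x_i$ for all $i$. The uniform measure is $U(A)=c_K^{-1}\mathrm{vol}(\{tv:t\in[0,1],v\in A\})$ for Borel $A\subset\mathbb S^{K-1}_+$. Convention: $(r-s_k)/u_k=+\infty$ when $u_k=0$ (a $U$-null event). $\Gamma$ is the gamma function. *)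

theory Defs
  imports "HOL-Analysis.Analysis"
begin

text \<open>Dimension K is CARD('n); vectors in R^K are of type real^'n (Euclidean norm).\<close>

definition cK :: "'n::finite itself \<Rightarrow> real" where
  "cK _ = pi powr (real CARD('n) / 2) / (2 ^ CARD('n) * Gamma (real CARD('n) / 2 + 1))"

definition HV :: "real \<Rightarrow> (real^'n::finite) set \<Rightarrow> ennreal" where
  "HV r S = emeasure lebesgue
     {x :: real^'n. (\<forall>i. 0 \<le> x$i \<and> x$i \<le> r) \<and> (\<exists>s\<in>S. \<forall>i. s$i \<le> x$i)}"

definition sphere_pos :: "(real^'n::finite) set" where
  "sphere_pos = {v. norm v = 1 \<and> (\<forall>i. 0 \<le> v$i)}"

definition cone01 :: "(real^'n::finite) set \<Rightarrow> (real^'n) set" where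
  "cone01 A = {t *\<^sub>R v | t v. t \<in> {0..1} \<and> v \<in> A}"

text \<open>Uniform measure on the positive orthant of the unit sphere:
  U(A) = c_K^{-1} vol(cone01 A) on Borel subsets of sphere_pos.\<close>
definition U_sph :: "(real^'n::finite) measure" where
  "U_sph = measure_of sphere_pos (sets (restrict_space borel sphere_pos))
     (\<lambda>A. ennreal (1 / cK TYPE('n)) * emeasure lebesgue (cone01 A))"

definition ratio :: "real \<Rightarrow> real \<Rightarrow> real \<Rightarrow> ennreal" where
  "ratio r sk uk = (if uk = 0 then \<infinity> else ennreal ((r - sk) / uk))"

end

theory Submission
  imports Defs
begin

definition conR :: "real \<Rightarrow> (real^'n::finite) set \<Rightarrow> (real^'n) set" where
  "conR R A = {y. y \<noteq> 0 \<and> sgn y \<in> A \<and> norm y \<le> R}"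

lemma sphere_pos_closed: "closed (sphere_pos :: (real^'n::finite) set)"
proof -
  have "sphere_pos = {v::real^'n. norm v = 1} \<inter> (\<Inter>i. {v. 0 \<le> v$i})"
    by (auto simp: sphere_pos_def)
  moreover have "closed {v::real^'n. norm v = 1}"
    by (rule closed_Collect_eq) (auto intro: continuous_intros)
  moreover have "closed (\<Inter>i. {v::real^'n. 0 \<le> v$i})"
    using closed_halfspace_component_ge_cart by (intro closed_INT) auto
  ultimately show ?thesis by (metis closed_Int)
qed

lemma sphere_pos_borel: "(sphere_pos :: (real^'n::finite) set) \<in> sets borel"
  using sphere_pos_closed by (rule borel_closed)

lemma conR_borel: "A \<in> sets borel \<Longrightarrow> conR R (A::(real^'n::finite) set) \<in> sets borel"
proof -
  assume A: "A \<in> sets borel"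
  have "conR R A = {y. y \<noteq> 0} \<inter> (sgn -` A) \<inter> {y. norm y \<le> R}"
    by (auto simp: conR_def)
  moreover have "sgn -` A \<in> sets borel"
    using measurable_sets[OF borel_measurable_sgn A] by simp
  ultimately show ?thesis by auto
qed

lemma cone01_conR:
  assumes "A \<subseteq> (sphere_pos :: (real^'n::finite) set)"
  shows "cone01 A - {0} = conR 1 A"
proof
  show "cone01 A - {0} \<subseteq> conR 1 A"
  proof
    fix y assume y: "y \<in> cone01 A - {0}"
    then obtain t v where tv: "y = t *\<^sub>R v" "t \<in> {0..1}" "v \<in> A" by (auto simp: cone01_def)
    have nv: "norm v = 1" using tv assms by (auto simp: sphere_pos_def)
    have "t \<noteq> 0" using y tv by auto
    then have "t > 0" using tv by auto
    then have "sgn y = v" using tv nv by (simp add: sgn_div_norm)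
    moreover have "norm y = t" using tv nv \<open>t>0\<close> by simp
    ultimately show "y \<in> conR 1 A" using y tv by (auto simp: conR_def)
  qed
next
  show "conR 1 A \<subseteq> cone01 A - {0}"
  proof
    fix y assume y: "y \<in> conR 1 A"
    have "y = norm y *\<^sub>R sgn y" using y by (simp add: sgn_div_norm conR_def)
    then show "y \<in> cone01 A - {0}" using y unfolding cone01_def conR_def by force
  qed
qed

lemma conR_scale:
  assumes "R > 0"
  shows "conR R A = (\<lambda>x. R *\<^sub>R x + 0) ` conR 1 (A::(real^'n::finite) set)"
proof
  show "conR R A \<subseteq> (\<lambda>x. R *\<^sub>R x + 0) ` conR 1 A"
  proof
    fix y assume y: "y \<in> conR R A"
    have "y = R *\<^sub>R ((1/R) *\<^sub>R y) + 0" using assms by simp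
    moreover have "(1/R) *\<^sub>R y \<in> conR 1 A"
      using y assms by (auto simp: conR_def sgn_scaleR divide_simps)
    ultimately show "y \<in> (\<lambda>x. R *\<^sub>R x + 0) ` conR 1 A" by blast
  qed
next
  show "(\<lambda>x. R *\<^sub>R x + 0) ` conR 1 A \<subseteq> conR R A"
    using assms by (auto simp: conR_def sgn_scaleR mult_le_cancel_left1)
qed

lemma emeasure_conR:
  assumes "R > 0"
  shows "emeasure lebesgue (conR R (A::(real^'n::finite) set)) = ennreal (R ^ CARD('n)) * emeasure lebesgue (conR 1 A)"
  using emeasure_lebesgue_affine[of R 0 "conR 1 A"] assms
  by (simp add: conR_scale[OF assms] ennreal_power)

lemma sigma_alg_U: "sigma_algebra (sphere_pos::(real^'n::finite) set) (sets (restrict_space borel sphere_pos))"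
  using sets.sigma_algebra_axioms[of "restrict_space borel (sphere_pos::(real^'n::finite) set)"]
  by (simp add: space_restrict_space)

lemma space_U: "space (U_sph::(real^'n::finite) measure) = sphere_pos"
  unfolding U_sph_def by (rule sigma_algebra.space_measure_of_eq[OF sigma_alg_U])

lemma sets_U: "sets (U_sph::(real^'n::finite) measure) = sets (restrict_space borel sphere_pos)"
  unfolding U_sph_def by (rule sigma_algebra.sets_measure_of_eq[OF sigma_alg_U])

lemma sets_U_iff: "A \<in> sets (U_sph::(real^'n::finite) measure) \<longleftrightarrow> A \<subseteq> sphere_pos \<and> A \<in> sets borel"
  unfolding sets_U by (rule sets_restrict_space_iff) (simp add: sphere_pos_borel)

lemma cK_pos: "cK TYPE('n::finite) > 0"
  unfolding cK_def by (intro divide_pos_pos mult_pos_pos Gamma_real_pos) auto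

lemma null_zero: "{0::real^'n::finite} \<in> null_sets lebesgue"
  using negligible_iff_null_sets negligible_sing by blast

lemma emeasure_cone01:
  assumes "A \<subseteq> (sphere_pos::(real^'n::finite) set)" "A \<in> sets borel"
  shows "emeasure lebesgue (cone01 A) = emeasure lebesgue (conR 1 A)"
proof -
  have m: "conR 1 A \<in> sets lebesgue" using conR_borel[OF assms(2)] by auto
  have "cone01 A = conR 1 A \<or> cone01 A = conR 1 A \<union> {0}"
    using cone01_conR[OF assms(1)] by blast
  then show ?thesis using emeasure_Un_null_set[OF m null_zero] by auto
qed

lemma emeasure_U:
  assumes "A \<in> sets (U_sph::(real^'n::finite) measure)"
  shows "emeasure U_sph A = ennreal (1 / cK TYPE('n)) * emeasure lebesgue (conR 1 A)"
proof -
  let ?\<mu> = "\<lambda>A::(real^'n) set. ennreal (1 / cK TYPE('n)) * emeasure lebesgue (cone01 A)"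
  have pos: "positive (sets (restrict_space borel sphere_pos)) ?\<mu>"
    by (simp add: positive_def cone01_def)
  have ca: "countably_additive (sets (restrict_space borel sphere_pos)) ?\<mu>"
    unfolding countably_additive_def
  proof safe
    fix F :: "nat \<Rightarrow> (real^'n) set"
    assume F: "range F \<subseteq> sets (restrict_space borel sphere_pos)" "disjoint_family F"
      and U: "\<Union> (range F) \<in> sets (restrict_space borel sphere_pos)"
    have Fi: "F i \<subseteq> sphere_pos \<and> F i \<in> sets borel" for i
      using F(1) sets_U_iff[of "F i"] sets_U by auto
    have UU: "\<Union> (range F) \<subseteq> sphere_pos \<and> \<Union> (range F) \<in> sets borel"
      using U sets_U_iff[of "\<Union> (range F)"] sets_U by auto
    have "(\<Sum>i. ?\<mu> (F i)) = ennreal (1 / cK TYPE('n)) * (\<Sum>i. emeasure lebesgue (conR 1 (F i)))"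
      using Fi by (simp add: emeasure_cone01)
    also have "(\<Sum>i. emeasure lebesgue (conR 1 (F i))) = emeasure lebesgue (\<Union>i. conR 1 (F i))"
    proof (rule suminf_emeasure)
      have "conR 1 (F i) \<in> sets borel" for i using Fi conR_borel by blast
      then show "range (\<lambda>i. conR 1 (F i)) \<subseteq> sets lebesgue" by auto
      show "disjoint_family (\<lambda>i. conR 1 (F i))"
        using F(2) unfolding disjoint_family_on_def conR_def by auto
    qed
    also have "(\<Union>i. conR 1 (F i)) = conR 1 (\<Union> (range F))"
      by (auto simp: conR_def)
    finally show "(\<Sum>i. ?\<mu> (F i)) = ?\<mu> (\<Union> (range F))"
      using UU by (simp add: emeasure_cone01)
  qed
  have "emeasure U_sph A = ?\<mu> A"
    unfolding U_sph_def
    by (rule emeasure_measure_of_sigma[OF sigma_alg_U pos ca]) (use assms sets_U in auto)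
  then show ?thesis using assms sets_U_iff emeasure_cone01 by metis
qed

definition StarLe :: "((real^'n::finite) \<Rightarrow> ennreal) \<Rightarrow> (real^'n) set" where
  "StarLe g = {y. (\<forall>i. 0 \<le> y$i) \<and> (y = 0 \<or> ennreal (norm y) ^ CARD('n) \<le> g (sgn y))}"

definition StarLt :: "((real^'n::finite) \<Rightarrow> ennreal) \<Rightarrow> (real^'n) set" where
  "StarLt g = {y. (\<forall>i. 0 \<le> y$i) \<and> (y = 0 \<or> ennreal (norm y) ^ CARD('n) < g (sgn y))}"

lemma sgn_sphere: "y \<noteq> 0 \<Longrightarrow> (\<forall>i. 0 \<le> (y::real^'n::finite)$i) \<Longrightarrow> sgn y \<in> sphere_pos"
  by (auto simp: sphere_pos_def norm_sgn sgn_div_norm)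

lemma orth_of_sgn: "y \<noteq> 0 \<Longrightarrow> sgn y \<in> sphere_pos \<Longrightarrow> 0 \<le> (y::real^'n::finite)$i"
  by (auto simp: sphere_pos_def sgn_div_norm divide_simps zero_le_divide_iff)

lemma pow_le_root:
  assumes "t \<ge> 0" "p \<ge> 0" "K > 0"
  shows "ennreal t ^ K \<le> ennreal p \<longleftrightarrow> t \<le> root K p"
proof -
  have "ennreal t ^ K \<le> ennreal p \<longleftrightarrow> t ^ K \<le> root K p ^ K"
    using assms by (simp add: ennreal_power ennreal_le_iff)
  also have "\<dots> \<longleftrightarrow> t \<le> root K p"
    using assms by (intro power_mono_iff) auto
  finally show ?thesis .
qed

lemma simple_vol:
  fixes f :: "real^'n::finite \<Rightarrow> ennreal"
  assumes sf: "simple_function U_sph f" and fin: "\<And>x. f x < top"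
  shows "StarLe f \<in> sets lebesgue \<and>
         emeasure lebesgue (StarLe f) = ennreal (cK TYPE('n)) * (\<integral>\<^sup>+ u. f u \<partial>U_sph)"
proof -
  let ?K = "CARD('n)"
  define V where "V = f ` sphere_pos"
  define A where "A = (\<lambda>\<rho>. f -` {\<rho>} \<inter> (sphere_pos :: (real^'n) set))"
  define R where "R = (\<lambda>\<rho>. root ?K (enn2real \<rho>))"
  have finV: "finite V" using simple_functionD(1)[OF sf] by (simp add: V_def space_U)
  have AU: "A \<rho> \<in> sets U_sph" for \<rho> using simple_functionD(2)[OF sf] by (simp add: A_def space_U)
  then have AB: "A \<rho> \<subseteq> sphere_pos \<and> A \<rho> \<in> sets borel" for \<rho> using sets_U_iff by blast
  have Rnn: "R \<rho> \<ge> 0" for \<rho> by (simp add: R_def)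
  have eqS: "StarLe f = {0} \<union> (\<Union>\<rho>\<in>V. conR (R \<rho>) (A \<rho>))"
  proof safe
    fix y assume y: "y \<in> StarLe f" "y \<notin> (\<Union>\<rho>\<in>V. conR (R \<rho>) (A \<rho>))"
    show "y = 0"
    proof (rule ccontr)
      assume y0: "y \<noteq> 0"
      have sp: "sgn y \<in> sphere_pos" using y y0 sgn_sphere by (auto simp: StarLe_def)
      let ?\<rho> = "f (sgn y)"
      have r: "?\<rho> = ennreal (enn2real ?\<rho>)" using fin[of "sgn y"] by (simp add: less_top)
      have "ennreal (norm y) ^ ?K \<le> ennreal (enn2real ?\<rho>)" using y y0 r by (auto simp: StarLe_def)
      then have "norm y \<le> R ?\<rho>" unfolding R_def by (subst (asm) pow_le_root) auto
      then have "y \<in> conR (R ?\<rho>) (A ?\<rho>)" using y0 sp by (auto simp: conR_def A_def)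
      moreover have "?\<rho> \<in> V" using sp by (simp add: V_def)
      ultimately show False using y by auto
    qed
  next
    show "0 \<in> StarLe f" by (simp add: StarLe_def)
  next
    fix y \<rho> assume y: "\<rho> \<in> V" "y \<in> conR (R \<rho>) (A \<rho>)"
    have y0: "y \<noteq> 0" and sp: "sgn y \<in> sphere_pos" and fr: "f (sgn y) = \<rho>" and nr: "norm y \<le> R \<rho>"
      using y by (auto simp: conR_def A_def)
    have r: "\<rho> = ennreal (enn2real \<rho>)" using fin[of "sgn y"] fr by (simp add: less_top)
    have "ennreal (norm y) ^ ?K \<le> ennreal (enn2real \<rho>)"
      using nr unfolding R_def by (subst pow_le_root) auto
    then show "y \<in> StarLe f" using y0 sp fr r orth_of_sgn[OF y0 sp] by (auto simp: StarLe_def)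
  qed
  have cB: "conR (R \<rho>) (A \<rho>) \<in> sets lebesgue" for \<rho>
  proof -
    have "conR (R \<rho>) (A \<rho>) \<in> sets borel" using AB conR_borel by blast
    then show ?thesis by auto
  qed
  have UB: "(\<Union>\<rho>\<in>V. conR (R \<rho>) (A \<rho>)) \<in> sets lebesgue" using cB finV by auto
  have meas: "StarLe f \<in> sets lebesgue"
    unfolding eqS using UB null_setsD2[OF null_zero] by (intro sets.Un)
  have "emeasure lebesgue (StarLe f) = emeasure lebesgue (\<Union>\<rho>\<in>V. conR (R \<rho>) (A \<rho>))"
    using emeasure_Un_null_set[OF UB null_zero] eqS by (simp add: Un_commute)
  also have "\<dots> = (\<Sum>\<rho>\<in>V. emeasure lebesgue (conR (R \<rho>) (A \<rho>)))"
  proof (rule sum_emeasure[symmetric])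
    show "(\<lambda>\<rho>. conR (R \<rho>) (A \<rho>)) ` V \<subseteq> sets lebesgue" using cB by auto
    show "disjoint_family_on (\<lambda>\<rho>. conR (R \<rho>) (A \<rho>)) V"
      unfolding disjoint_family_on_def conR_def A_def by auto
  qed (fact finV)
  also have "\<dots> = (\<Sum>\<rho>\<in>V. \<rho> * emeasure lebesgue (conR 1 (A \<rho>)))"
  proof (rule sum.cong[OF refl])
    fix \<rho> assume "\<rho> \<in> V"
    then obtain x where x: "x \<in> sphere_pos" "\<rho> = f x" by (auto simp: V_def)
    have r: "\<rho> = ennreal (enn2real \<rho>)" using fin[of x] x by (simp add: less_top)
    have e0: "enn2real \<rho> \<ge> 0" by simp
    show "emeasure lebesgue (conR (R \<rho>) (A \<rho>)) = \<rho> * emeasure lebesgue (conR 1 (A \<rho>))"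
    proof (cases "R \<rho> > 0")
      case True
      have "R \<rho> ^ ?K = enn2real \<rho>" unfolding R_def using e0 by simp
      then show ?thesis using emeasure_conR[OF True] r by metis
    next
      case False
      then have R0: "R \<rho> = 0" using Rnn[of \<rho>] by auto
      then have "enn2real \<rho> = 0" unfolding R_def using e0 by simp
      then have "\<rho> = 0" using r by simp
      moreover have "conR (R \<rho>) (A \<rho>) = {}" using R0 by (auto simp: conR_def)
      ultimately show ?thesis by simp
    qed
  qed
  also have "\<dots> = ennreal (cK TYPE('n)) * (\<Sum>\<rho>\<in>V. \<rho> * emeasure U_sph (A \<rho>))"
  proof -
    have c1: "ennreal (cK TYPE('n)) * ennreal (1 / cK TYPE('n)) = 1"
      using cK_pos[where 'n='n] by (simp add: ennreal_mult[symmetric])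
    show ?thesis
      unfolding sum_distrib_left
      by (rule sum.cong[OF refl]) (simp add: emeasure_U[OF AU] c1 mult.left_commute mult.assoc[symmetric])
  qed
  also have "(\<Sum>\<rho>\<in>V. \<rho> * emeasure U_sph (A \<rho>)) = (\<integral>\<^sup>+ u. f u \<partial>U_sph)"
    by (simp add: nn_integral_eq_simple_integral[OF sf] simple_integral_def V_def A_def space_U)
  finally show ?thesis using meas by simp
qed

lemma q_mono: "real i / real (Suc i) \<le> real j / real (Suc j)" if "i \<le> j"
  using that by (simp add: divide_simps) (simp add: algebra_simps)

lemma q_lt1: "real i / real (Suc i) < 1" by simp

lemma mult_q_less:
  assumes "0 < a" "a < top" "q < 1" "0 \<le> q"
  shows "a * ennreal q < (a::ennreal)"
proof -
  obtain \<alpha> where a: "a = ennreal \<alpha>" "\<alpha> > 0" using assms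
    by (cases a rule: ennreal_cases) auto
  then have "\<alpha> * q < \<alpha>" using assms by simp
  then show ?thesis using a assms by (simp add: ennreal_mult[symmetric] ennreal_less_iff)
qed

lemma lt_vol:
  fixes g :: "real^'n::finite \<Rightarrow> ennreal"
  assumes gm: "g \<in> borel_measurable U_sph"
  shows "StarLt g \<in> sets lebesgue \<and>
         emeasure lebesgue (StarLt g) = ennreal (cK TYPE('n)) * (\<integral>\<^sup>+ u. g u \<partial>U_sph)"
proof -
  obtain f where sf: "\<And>i. simple_function U_sph (f i)" and inc: "incseq f"
    and fin: "\<And>i x. f i x < top" and sup: "\<And>x. (SUP i. f i x) = g x"
    using borel_measurable_implies_simple_function_sequence'[OF gm] by blast
  define q where "q = (\<lambda>i::nat. real i / real (Suc i))"
  define h where "h = (\<lambda>i x. f i x * ennreal (q i))"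
  have q01: "0 \<le> q i" "q i < 1" for i by (auto simp: q_def)
  have sh: "simple_function U_sph (h i)" for i
    unfolding h_def using sf by (intro simple_function_mult) auto
  have finh: "h i x < top" for i x
    unfolding h_def using fin[of i x] by (simp add: ennreal_mult_less_top)
  have inch: "h i x \<le> h j x" if "i \<le> j" for i j x
    unfolding h_def
    using inc that q_mono[OF that] by (intro mult_mono) (auto simp: incseq_def le_fun_def q_def)
  have hle: "h i x \<le> f i x" for i x
    unfolding h_def using q01[of i] mult_left_mono[of "ennreal (q i)" 1 "f i x"]
    by (simp add: ennreal_leI)
  have supl: "(SUP i. h i x) = g x" for x
  proof -
    have "(\<lambda>i. f i x) \<longlonglongrightarrow> g x"
      using LIMSEQ_SUP[of "\<lambda>i. f i x"] inc sup[of x] by (auto simp: incseq_def le_fun_def)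
    moreover have "(\<lambda>i. ennreal (q i)) \<longlonglongrightarrow> ennreal 1"
      unfolding q_def by (intro tendsto_ennrealI) (rule LIMSEQ_n_over_Suc_n)
    ultimately have "(\<lambda>i. h i x) \<longlonglongrightarrow> g x * ennreal 1"
      unfolding h_def by (intro tendsto_mult_ennreal) auto
    moreover have "(\<lambda>i. h i x) \<longlonglongrightarrow> (SUP i. h i x)"
      by (rule LIMSEQ_SUP) (auto simp: incseq_def inch)
    ultimately show ?thesis using LIMSEQ_unique by fastforce
  qed
  have eq: "StarLt g = (\<Union>i. StarLe (h i))"
  proof safe
    fix y assume y: "y \<in> StarLt g"
    show "y \<in> (\<Union>i. StarLe (h i))"
    proof (cases "y = 0")
      case True then show ?thesis by (auto simp: StarLe_def)
    next
      case False
      then have "ennreal (norm y) ^ CARD('n) < (SUP i. h i (sgn y))" using y supl by (simp add: StarLt_def)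
      then obtain i where "ennreal (norm y) ^ CARD('n) < h i (sgn y)" by (auto simp: less_SUP_iff)
      then show ?thesis using y by (auto simp: StarLe_def StarLt_def intro!: exI[of _ i])
    qed
  next
    fix y i assume y: "y \<in> StarLe (h i)"
    show "y \<in> StarLt g"
    proof (cases "y = 0")
      case True then show ?thesis by (auto simp: StarLt_def)
    next
      case False
      let ?u = "sgn y"
      have le: "ennreal (norm y) ^ CARD('n) \<le> h i ?u" using y False by (auto simp: StarLe_def)
      have "0 < ennreal (norm y) ^ CARD('n)" using False power_not_zero by fastforce
      then have hp: "0 < h i ?u" using le by simp
      then have fp: "0 < f i ?u" using hle[of i ?u] by simp
      have "h i ?u < f i ?u" unfolding h_def using mult_q_less[OF fp fin q01(2) q01(1)] .
      also have "f i ?u \<le> g ?u" using sup[of ?u] by (metis SUP_upper UNIV_I)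
      finally show ?thesis using le y by (auto simp: StarLt_def StarLe_def)
    qed
  qed
  have hm: "StarLe (h i) \<in> sets lebesgue" "emeasure lebesgue (StarLe (h i)) = ennreal (cK TYPE('n)) * (\<integral>\<^sup>+ u. h i u \<partial>U_sph)" for i
    using simple_vol[OF sh finh] by auto
  have incS: "incseq (\<lambda>i. StarLe (h i))"
    unfolding incseq_def StarLe_def using inch by (auto intro: order_trans)
  have "emeasure lebesgue (StarLt g) = (SUP i. emeasure lebesgue (StarLe (h i)))"
    unfolding eq by (rule SUP_emeasure_incseq[symmetric]) (use hm incS in auto)
  also have "\<dots> = ennreal (cK TYPE('n)) * (SUP i. (\<integral>\<^sup>+ u. h i u \<partial>U_sph))"
    by (simp add: hm SUP_mult_left_ennreal)
  also have "(SUP i. (\<integral>\<^sup>+ u. h i u \<partial>U_sph)) = (\<integral>\<^sup>+ u. (SUP i. h i u) \<partial>U_sph)"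
    by (rule nn_integral_monotone_convergence_SUP[symmetric])
       (auto simp: incseq_def le_fun_def inch intro: borel_measurable_simple_function[OF sh])
  also have "\<dots> = (\<integral>\<^sup>+ u. g u \<partial>U_sph)" by (simp add: supl)
  finally show ?thesis using eq hm by auto
qed

lemma less_INF_fin: "(a::ennreal) < (INF k::'n::finite. f k) \<longleftrightarrow> (\<forall>k. a < f k)"
  using finite_less_Inf_iff[of "range f" a] by auto

lemma ratio_pos_iff:
  fixes u :: "real^'n::finite"
  assumes "\<forall>k. 0 < u$k" "\<forall>k. s$k \<le> r" "0 \<le> \<alpha>"
  shows "ennreal \<alpha> < (INF k. ratio r (s$k) (u$k) ^ CARD('n)) \<longleftrightarrow> (\<forall>k. \<alpha> * u$k ^ CARD('n) < (r - s$k) ^ CARD('n))"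
proof -
  have "ennreal \<alpha> < ratio r (s$k) (u$k) ^ CARD('n) \<longleftrightarrow> \<alpha> * u$k ^ CARD('n) < (r - s$k) ^ CARD('n)" for k
  proof -
    have uk: "u$k > 0" using assms by auto
    have nn: "(r - s$k) / u$k \<ge> 0" using uk assms(2)[rule_format, of k] by simp
    have "ratio r (s$k) (u$k) ^ CARD('n) = ennreal (((r - s$k) / u$k) ^ CARD('n))"
      using uk nn by (simp add: ratio_def ennreal_power)
    then have "ennreal \<alpha> < ratio r (s$k) (u$k) ^ CARD('n) \<longleftrightarrow> \<alpha> < ((r - s$k) / u$k) ^ CARD('n)"
      using nn assms(3) by (simp add: ennreal_less_iff)
    also have "\<dots> \<longleftrightarrow> \<alpha> * u$k ^ CARD('n) < (r - s$k) ^ CARD('n)"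
      using uk by (simp add: power_divide less_divide_eq)
    finally show ?thesis .
  qed
  then show ?thesis by (simp add: less_INF_fin)
qed

lemma G2_meas:
  fixes S :: "(real^'n::finite) set"
  assumes box: "\<And>s i. s \<in> S \<Longrightarrow> 0 \<le> s$i \<and> s$i \<le> r"
  shows "(\<lambda>u. if (\<forall>k. 0 < u$k) then (SUP s\<in>S. INF k. ratio r (s$k) (u$k) ^ CARD('n)) else 0) \<in> borel_measurable borel"
    (is "?G \<in> _")
proof (rule borel_measurableI_greater)
  fix a :: ennreal
  have "open {x. a < ?G x}"
  proof (cases a)
    case top
    then show ?thesis by simp
  next
    case (real \<alpha>)
    let ?P = "{u::real^'n. \<forall>k. 0 < u$k}"
    have eqG: "{x. a < ?G x} = (\<Union>s\<in>S. ?P \<inter> (\<Inter>k. {u. \<alpha> * u$k ^ CARD('n) < (r - s$k) ^ CARD('n)}))"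
    proof (intro equalityI subsetI)
      fix x assume "x \<in> {x. a < ?G x}"
      then have x: "a < ?G x" by simp
      then have P: "\<forall>k. 0 < x$k" by (auto split: if_splits)
      then obtain s where s: "s \<in> S" "a < (INF k. ratio r (s$k) (x$k) ^ CARD('n))"
        using x by (auto simp: less_SUP_iff)
      then have "\<forall>k. \<alpha> * x$k ^ CARD('n) < (r - s$k) ^ CARD('n)"
        using ratio_pos_iff[OF P, of s r \<alpha>] box real by auto
      then show "x \<in> (\<Union>s\<in>S. ?P \<inter> (\<Inter>k. {u. \<alpha> * u$k ^ CARD('n) < (r - s$k) ^ CARD('n)}))"
        using s P by auto
    next
      fix x assume "x \<in> (\<Union>s\<in>S. ?P \<inter> (\<Inter>k. {u. \<alpha> * u$k ^ CARD('n) < (r - s$k) ^ CARD('n)}))"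
      then obtain s where s: "s \<in> S" and P: "\<forall>k. 0 < x$k"
        and c: "\<forall>k. x \<in> {u. \<alpha> * u$k ^ CARD('n) < (r - s$k) ^ CARD('n)}" by blast
      have "a < (INF k. ratio r (s$k) (x$k) ^ CARD('n))"
        using ratio_pos_iff[OF P, of s r \<alpha>] box real s c by auto
      then show "x \<in> {x. a < ?G x}" using s P by (auto simp: less_SUP_iff)
    qed
    moreover have op: "open (?P \<inter> (\<Inter>k. {u::real^'n. \<alpha> * u$k ^ CARD('n) < (r - s$k) ^ CARD('n)}))" for s :: "real^'n"
    proof -
      have "?P = (\<Inter>k. {u::real^'n. u$k > 0})" by auto
      then have "open ?P" using open_halfspace_component_gt_cart by (auto intro!: open_INT)
      moreover have "open (\<Inter>k. {u::real^'n. \<alpha> * u$k ^ CARD('n) < (r - s$k) ^ CARD('n)})"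
      proof (intro open_INT ballI)
        fix k show "open {u::real^'n. \<alpha> * u$k ^ CARD('n) < (r - s$k) ^ CARD('n)}"
          by (rule open_Collect_less) (auto intro!: continuous_intros)
      qed auto
      ultimately show ?thesis by auto
    qed
    show ?thesis unfolding eqG by (intro open_UN ballI op)
  qed
  then show "{x \<in> space borel. a < ?G x} \<in> sets borel" by auto
qed

definition Gf :: "real \<Rightarrow> (real^'n::finite) set \<Rightarrow> (real^'n) \<Rightarrow> ennreal" where
  "Gf r S u = (SUP s\<in>S. INF k. ratio r (s$k) (u$k) ^ CARD('n))"

definition G2f :: "real \<Rightarrow> (real^'n::finite) set \<Rightarrow> (real^'n) \<Rightarrow> ennreal" where
  "G2f r S u = (if \<forall>k. 0 < u$k then Gf r S u else 0)"

definition Ef :: "real \<Rightarrow> (real^'n::finite) set \<Rightarrow> (real^'n) set" where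
  "Ef r S = {y. (\<forall>i. 0 \<le> y$i \<and> y$i \<le> r) \<and> (\<exists>s\<in>S. \<forall>i. s$i \<le> r - y$i)}"

definition Zs :: "(real^'n::finite) set" where
  "Zs = {y. \<exists>k. y$k = 0}"

lemma Zs_null: "Zs \<in> null_sets lebesgue"
proof -
  have eq: "Zs = (\<Union>k\<in>UNIV. {y::real^'n. y$k = 0})" by (auto simp: Zs_def)
  have "{y::real^'n. y$k = 0} \<in> null_sets lebesgue" for k
    using negligible_standard_hyperplane_cart negligible_iff_null_sets by blast
  then show ?thesis unfolding eq by (intro null_sets_UN') (auto intro: countable_finite)
qed

lemma comp_sgn: "y$k = norm y * (sgn y)$k" for y :: "real^'n::finite"
  by (cases "y = 0") (auto simp: sgn_div_norm)

lemma C1: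
  assumes box: "\<And>s i. s \<in> S \<Longrightarrow> 0 \<le> s$i \<and> s$i \<le> r"
  shows "StarLt (G2f r S) - {0} \<subseteq> Ef r (S::(real^'n::finite) set)"
proof
  fix y assume y: "y \<in> StarLt (G2f r S) - {0}"
  let ?u = "sgn y" and ?t = "norm y" and ?K = "CARD('n)"
  have y0: "y \<noteq> 0" and orth: "\<forall>i. 0 \<le> y$i" and lt: "ennreal ?t ^ ?K < G2f r S ?u"
    using y by (auto simp: StarLt_def)
  have P: "\<forall>k. 0 < ?u$k" using lt by (auto simp: G2f_def split: if_splits)
  then have "ennreal ?t ^ ?K < Gf r S ?u" using lt by (simp add: G2f_def)
  then obtain s where s: "s \<in> S" "ennreal (?t ^ ?K) < (INF k. ratio r (s$k) (?u$k) ^ ?K)"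
    by (auto simp: Gf_def less_SUP_iff ennreal_power)
  have sb: "\<forall>k. s$k \<le> r" using box s(1) by auto
  have c: "\<forall>k. ?t ^ ?K * ?u$k ^ ?K < (r - s$k) ^ ?K"
    using ratio_pos_iff[OF P sb, of "?t ^ ?K"] s(2) by simp
  have "y$k \<le> r - s$k" for k
  proof -
    have "(?t * ?u$k) ^ ?K < (r - s$k) ^ ?K" using c by (simp add: power_mult_distrib)
    then have "?t * ?u$k < r - s$k"
      by (rule power_less_imp_less_base) (use sb in auto)
    then show ?thesis using comp_sgn[of y k] by simp
  qed
  then have "s$k \<le> r - y$k" "y$k \<le> r" for k using box[OF s(1), of k] by (smt (verit))+
  then show "y \<in> Ef r S" using orth s(1) unfolding Ef_def by blast
qed

lemma C2:
  assumes box: "\<And>s i. s \<in> S \<Longrightarrow> 0 \<le> s$i \<and> s$i \<le> r" and \<delta>: "\<delta> > 0"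
  shows "Ef r (S::(real^'n::finite) set) \<subseteq> StarLt (\<lambda>u. ennreal (1 + \<delta>) * G2f r S u) \<union> Zs \<union> {0}"
proof
  fix y assume yE: "y \<in> Ef r S"
  show "y \<in> StarLt (\<lambda>u. ennreal (1 + \<delta>) * G2f r S u) \<union> Zs \<union> {0}"
  proof (cases "y = 0 \<or> y \<in> Zs")
    case True then show ?thesis by auto
  next
    case False
    let ?u = "sgn y" and ?t = "norm y" and ?K = "CARD('n)"
    have y0: "y \<noteq> 0" and nz: "\<forall>k. y$k \<noteq> 0" using False by (auto simp: Zs_def)
    obtain s where s: "s \<in> S" "\<forall>i. s$i \<le> r - y$i" and yb: "\<forall>i. 0 \<le> y$i \<and> y$i \<le> r"
      using yE by (auto simp: Ef_def)
    have tpos: "?t > 0" using y0 by simp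
    have upos: "0 < ?u$k" for k using nz[rule_format, of k] yb tpos by (auto simp: sgn_div_norm less_le)
    then have P: "\<forall>k. 0 < ?u$k" by auto
    have "ennreal ?t ^ ?K \<le> ratio r (s$k) (?u$k) ^ ?K" for k
    proof -
      have "?t * ?u$k \<le> r - s$k" using s(2)[rule_format, of k] comp_sgn[of y k] by linarith
      then have le: "?t \<le> (r - s$k) / ?u$k" using upos[of k] by (simp add: le_divide_eq)
      have "ennreal ?t ^ ?K = ennreal (?t ^ ?K)" by (simp add: ennreal_power)
      also have "\<dots> \<le> ennreal (((r - s$k) / ?u$k) ^ ?K)"
        using le by (intro ennreal_leI power_mono) auto
      also have "\<dots> = ratio r (s$k) (?u$k) ^ ?K"
      proof -
        have nn: "0 \<le> (r - s$k) / ?u$k" using le norm_ge_zero[of y] by linarith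
        then show ?thesis using upos[of k] by (simp add: ratio_def ennreal_power)
      qed
      finally show ?thesis .
    qed
    then have "ennreal ?t ^ ?K \<le> (INF k. ratio r (s$k) (?u$k) ^ ?K)" by (simp add: le_INF_iff)
    also have "\<dots> \<le> Gf r S ?u" unfolding Gf_def using s(1) by (rule SUP_upper)
    also have "\<dots> = G2f r S ?u" using P by (simp add: G2f_def)
    finally have le: "ennreal ?t ^ ?K \<le> G2f r S ?u" .
    have pos: "0 < ennreal ?t ^ ?K" using y0 power_not_zero by fastforce
    have "ennreal ?t ^ ?K < ennreal (1 + \<delta>) * G2f r S ?u"
    proof (cases "G2f r S ?u" rule: ennreal_cases)
      case (real g)
      have "ennreal g > 0" using pos le real by (metis order_less_le_trans)
      then have gp: "g > 0" by (simp add: ennreal_less_zero_iff)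
      have "ennreal g < ennreal ((1 + \<delta>) * g)" using gp \<delta> by (simp add: ennreal_less_iff)
      moreover have "ennreal ((1 + \<delta>) * g) = ennreal (1 + \<delta>) * G2f r S ?u"
        using real \<delta> gp by (simp only: ennreal_mult)
      ultimately show ?thesis using le real by (metis order_le_less_trans)
    next
      case top
      have "ennreal ?t ^ ?K < top" by (simp add: ennreal_power)
      then show ?thesis using top \<delta> by (simp add: ennreal_mult_top)
    qed
    then show ?thesis using yb by (auto simp: StarLt_def)
  qed
qed

lemma HV_Ef:
  assumes box: "\<And>s i. s \<in> S \<Longrightarrow> 0 \<le> s$i \<and> s$i \<le> r"
  shows "HV r S = emeasure lebesgue (Ef r (S::(real^'n::finite) set))"
proof -
  let ?D = "{x :: real^'n. (\<forall>i. 0 \<le> x$i \<and> x$i \<le> r) \<and> (\<exists>s\<in>S. \<forall>i. s$i \<le> x$i)}"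
  have img: "(\<lambda>x. (-1) *\<^sub>R x + vec r) ` ?D = Ef r S"
  proof (intro equalityI subsetI)
    fix y assume "y \<in> (\<lambda>x. (-1) *\<^sub>R x + vec r) ` ?D"
    then obtain x where x: "x \<in> ?D" "y = (-1) *\<^sub>R x + vec r" by blast
    then show "y \<in> Ef r S" by (auto simp: Ef_def)
  next
    fix y assume y: "y \<in> Ef r S"
    then have "vec r - y \<in> ?D" by (auto simp: Ef_def)
    moreover have "y = (-1) *\<^sub>R (vec r - y) + vec r" by simp
    ultimately show "y \<in> (\<lambda>x. (-1) *\<^sub>R x + vec r) ` ?D" by blast
  qed
  show ?thesis
    unfolding HV_def using emeasure_lebesgue_affine[of "-1" "vec r" ?D] img by simp
qed

lemma AE_G:
  "AE u in (U_sph::(real^'n::finite) measure). G2f r S u = Gf r S u"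
proof (rule AE_I')
  let ?N = "sphere_pos \<inter> (Zs :: (real^'n) set)"
  have Zb: "(Zs :: (real^'n) set) \<in> sets borel"
  proof -
    have eq: "Zs = (\<Union>k\<in>UNIV. {y::real^'n. y$k = 0})" by (auto simp: Zs_def)
    have "closed {y::real^'n. y$k = 0}" for k
      by (rule closed_Collect_eq) (auto intro!: continuous_intros)
    then show ?thesis unfolding eq by (intro sets.countable_UN') (auto intro: countable_finite)
  qed
  have NU: "?N \<in> sets U_sph" using Zb sphere_pos_borel sets_U_iff by blast
  have "conR 1 ?N \<subseteq> Zs"
    by (auto simp: conR_def Zs_def sgn_div_norm)
  then have "emeasure lebesgue (conR 1 ?N) = 0"
    using Zs_null by (meson null_sets_completion_subset null_setsD1)
  then show "?N \<in> null_sets U_sph" using emeasure_U[OF NU] NU by auto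
  show "{u \<in> space U_sph. \<not> G2f r S u = Gf r S u} \<subseteq> ?N"
  proof
    fix u assume u: "u \<in> {u \<in> space U_sph. \<not> G2f r S u = Gf r S u}"
    then have sp: "u \<in> sphere_pos" by (simp add: space_U)
    obtain k where "\<not> 0 < u$k" using u by (auto simp: G2f_def split: if_splits)
    moreover have "0 \<le> u$k" using sp by (auto simp: sphere_pos_def)
    ultimately show "u \<in> ?N" using sp by (auto simp: Zs_def intro!: exI[of _ k])
  qed
qed

lemma main_vol:
  fixes S :: "(real^'n::finite) set"
  assumes box: "\<And>s i. s \<in> S \<Longrightarrow> 0 \<le> s$i \<and> s$i \<le> r" and r: "r > 0"
  shows "emeasure lebesgue (Ef r S) = ennreal (cK TYPE('n)) * (\<integral>\<^sup>+ u. G2f r S u \<partial>U_sph)"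
proof -
  let ?c = "ennreal (cK TYPE('n))"
  let ?G = "G2f r S"
  have Gb: "?G \<in> borel_measurable borel"
    using G2_meas[OF box] unfolding G2f_def[abs_def] Gf_def by simp
  have GU: "?G \<in> borel_measurable U_sph"
    using measurable_restrict_space1[OF Gb, of sphere_pos] by (simp add: measurable_cong_sets[OF sets_U refl])
  have GUd: "(\<lambda>u. ennreal (1 + d) * ?G u) \<in> borel_measurable U_sph" for d
    using GU by measurable
  define V where "V = emeasure lebesgue (StarLt ?G)"
  have LV: "StarLt ?G \<in> sets lebesgue" "V = ?c * (\<integral>\<^sup>+ u. ?G u \<partial>U_sph)"
    using lt_vol[OF GU] by (auto simp: V_def)
  have Vd: "StarLt (\<lambda>u. ennreal (1 + d) * ?G u) \<in> sets lebesgue"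
           "emeasure lebesgue (StarLt (\<lambda>u. ennreal (1 + d) * ?G u)) = ennreal (1 + d) * V" for d
  proof -
    show "StarLt (\<lambda>u. ennreal (1 + d) * ?G u) \<in> sets lebesgue" using lt_vol[OF GUd] by auto
    have "emeasure lebesgue (StarLt (\<lambda>u. ennreal (1 + d) * ?G u)) = ?c * (ennreal (1 + d) * (\<integral>\<^sup>+ u. ?G u \<partial>U_sph))"
      using lt_vol[OF GUd] nn_integral_cmult[OF GU] by simp
    then show "emeasure lebesgue (StarLt (\<lambda>u. ennreal (1 + d) * ?G u)) = ennreal (1 + d) * V"
      using LV by (simp add: mult_ac)
  qed
  have sub1: "StarLt ?G - {0} \<subseteq> Ef r S" using C1[OF box] .
  have Ebox: "Ef r S \<subseteq> cbox 0 (vec r)" by (auto simp: Ef_def mem_box_cart)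
  have "StarLt ?G \<subseteq> cbox 0 (vec r)"
  proof -
    have "(0::real^'n) \<in> cbox 0 (vec r)" using r by (auto simp: mem_box_cart)
    then show ?thesis using sub1 Ebox by blast
  qed
  then have "V \<le> emeasure lebesgue (cbox (0::real^'n) (vec r))"
    unfolding V_def by (rule emeasure_mono) auto
  also have "\<dots> < top" using fmeasurableD2[OF lmeasurable_cbox] by (simp add: less_top)
  finally have Vfin: "V < top" .
  then obtain v where v: "V = ennreal v" "0 \<le> v" by (cases V rule: ennreal_cases) auto
  define M0 where "M0 = StarLt ?G - {0}"
  have M0m: "M0 \<in> sets lebesgue" using LV null_setsD2[OF null_zero] by (auto simp: M0_def)
  have M0v: "emeasure lebesgue M0 = V"
    unfolding M0_def V_def by (rule emeasure_Diff_null_set[OF null_zero LV(1)])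
  have ZN: "Zs \<union> {0} \<in> null_sets lebesgue" using Zs_null null_zero by auto
  define N where "N = (\<lambda>n::nat. StarLt (\<lambda>u. ennreal (1 + 1 / real (Suc n)) * ?G u) \<union> (Zs \<union> {0}))"
  have Nm: "N n \<in> sets lebesgue" for n
    unfolding N_def using Vd(1) null_setsD2[OF ZN] by (rule sets.Un)
  have Nv: "emeasure lebesgue (N n) = ennreal (1 + 1 / real (Suc n)) * V" for n
    unfolding N_def by (subst emeasure_Un_null_set[OF Vd(1) ZN]) (rule Vd(2))
  have M0N: "M0 \<subseteq> N n" for n
  proof -
    have "?G u \<le> ennreal (1 + 1 / real (Suc n)) * ?G u" for u
      using mult_right_mono[of 1 "ennreal (1 + 1 / real (Suc n))" "?G u"] by (simp add: ennreal_leI)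
    then show ?thesis unfolding M0_def N_def StarLt_def by (auto intro: order_less_le_trans)
  qed
  have EN: "Ef r S \<subseteq> N n" for n
  proof -
    have "0 < 1 / real (Suc n)" by simp
    from C2[OF box this] show ?thesis unfolding N_def by blast
  qed
  have dv: "emeasure lebesgue (N n - M0) = ennreal (v / real (Suc n))" for n
  proof -
    have "emeasure lebesgue (N n - M0) = emeasure lebesgue (N n) - emeasure lebesgue M0"
      using M0N M0m Nm M0v Vfin by (intro emeasure_Diff) auto
    also have "\<dots> = ennreal ((1 + 1 / real (Suc n)) * v) - ennreal v"
      using Nv M0v v by (simp add: ennreal_mult)
    also have "\<dots> = ennreal (v / real (Suc n))"
      using v by (simp add: ennreal_minus algebra_simps)
    finally show ?thesis .
  qed
  define W where "W = (\<Inter>n. N n - M0)"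
  have Wm: "W \<in> sets lebesgue" using Nm M0m by (auto simp: W_def)
  have Wle: "emeasure lebesgue W \<le> ennreal (v / real (Suc n))" for n
    unfolding W_def dv[symmetric] by (rule emeasure_mono) (use Nm M0m in auto)
  have "emeasure lebesgue W \<le> 0"
  proof (rule ennreal_le_epsilon)
    fix e :: real assume e: "0 < e"
    obtain n :: nat where n: "v / e < real n" using reals_Archimedean2 by blast
    have "v / real (Suc n) \<le> e"
    proof -
      have "v < e * real n" using n e by (simp add: divide_less_eq mult.commute)
      then have "v \<le> e * real (Suc n)" using e by (simp add: algebra_simps)
      then show ?thesis by (simp add: divide_le_eq mult.commute)
    qed
    then show "emeasure lebesgue W \<le> 0 + ennreal e"
      using Wle[of n] by (metis add_0 ennreal_leI order_trans)
  qed
  then have WN: "W \<in> null_sets lebesgue" using Wm by auto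
  have "Ef r S - M0 \<subseteq> W" using EN by (auto simp: W_def)
  then have EM: "Ef r S - M0 \<in> null_sets lebesgue" using WN by (rule null_sets_completion_subset)
  have "Ef r S = M0 \<union> (Ef r S - M0)" using sub1 by (auto simp: M0_def)
  then have "emeasure lebesgue (Ef r S) = emeasure lebesgue M0"
    using emeasure_Un_null_set[OF M0m EM] by simp
  then show ?thesis using M0v LV by simp
qed

theorem lemmaD1:
  fixes r :: real and S :: "(real^'n::finite) set"
  assumes "r > 0"
    and "S \<subseteq> {x. \<forall>i. 0 \<le> x$i \<and> x$i \<le> r}"
  shows "HV r S = ennreal (cK TYPE('n)) *
           (\<integral>\<^sup>+ u. (SUP s\<in>S. INF k. (ratio r (s$k) (u$k)) ^ CARD('n)) \<partial>U_sph)"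
proof -
  have box: "\<And>s i. s \<in> S \<Longrightarrow> 0 \<le> s$i \<and> s$i \<le> r" using assms(2) by auto
  have "HV r S = ennreal (cK TYPE('n)) * (\<integral>\<^sup>+ u. G2f r S u \<partial>U_sph)"
    using HV_Ef[OF box] main_vol[OF box assms(1)] by simp
  also have "(\<integral>\<^sup>+ u. G2f r S u \<partial>U_sph) = (\<integral>\<^sup>+ u. Gf r S u \<partial>U_sph)"
    by (rule nn_integral_cong_AE[OF AE_G])
  finally show ?thesis by (simp add: Gf_def)
qed

end
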